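(* Let $M^3$ be a real hypersurface in $\mathbb{C}P^2$ or $\mathbb{C}H^2$ and $p$ a point where $AW\neq\alpha W$. Write $AW=\alpha W+\beta X$ with $\beta>0$ and $X\in W^\perp$ a unit vector, let $Y=\varphi X$, and let $\lambda=\langle AX,X\rangle$, $\mu=\langle AX,Y\rangle$, $\nu=\langle AY,Y\rangle$, so that with respect to the orthonormal frame $(W,X,Y)$, $$A=\begin{pmatrix}\alpha&\beta&0\\ \beta&\lambda&\mu\\ 0&\mu&\nu\end{pmatrix}.$$ Then $(R(X,Y)\cdot S)X$ and $(R(X,Y)\cdot S)Y$ are multiples of $W$ at $p$ if and only if $$\mu\big(\beta^2\nu-\alpha(4c+\lambda\nu-\mu^2)\big)=0\quad\text{and}\quad \beta^2(\mu^2-\nu^2)=(4c+\lambda\nu-\mu^2)\big(\alpha(\lambda-\nu)-\beta^2\big).$$ The same equivalence holds at a point where $AW=\alpha W$, where $X$ is taken to be any unit principal vector in $W^\perp$, $Y=\varphi X$, $\lambda=\langle AX,X\rangle$, $\nu=\langle AY,Y\rangle$, and $\beta=\mu=0$.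
   Context: $\mathbb{C}P^2$, $\mathbb{C}H^2$ carry Kähler metrics $\langle\cdot,\cdot\rangle$ of constant holomorphic sectional curvature $4c\ne0$, complex structure $J$, connection $\widetilde\nabla$. For a real hypersurface $M$ with unit normal $\xi$: structure vector $W$ with $JW=\xi$; $W^\perp$ the holomorphic distribution; $\varphi X=JX-\langle X,W\rangle\xi$; shape operator $AX=-\widetilde\nabla_X\xi$; $\alpha=\langle AW,W\rangle$; $R$ the curvature tensor of $M$ ($R(X,Y)=\nabla_X\nabla_Y-\nabla_Y\nabla_X-\nabla_{[X,Y]}$); $S$ the Ricci tensor (type (1,1)), $\langle SX,Y\rangle=\operatorname{trace}\{Z\mapsto R(Z,X)Y\}$. For tangent $X,Y$, $R(X,Y)\cdot S=R(X,Y)\circ S-S\circ R(X,Y)$. *)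

theory Defs
  imports "HOL-Analysis.Analysis"
begin

text \<open>Pointwise model: the tangent space T_pM of the real hypersurface M^3 at p is
  modelled as real^3 with its Euclidean inner product. W is the structure vector,
  phi the induced structure tensor, A the shape operator, c the constant with
  holomorphic sectional curvature 4c of the ambient CP^2 (c>0) or CH^2 (c<0).\<close>

type_synonym tvec = "real ^ 3"

text \<open>Almost contact metric structure induced on T_pM by J and the unit normal xi.\<close>
definition structure_at :: "tvec \<Rightarrow> (tvec \<Rightarrow> tvec) \<Rightarrow> bool" where
  "structure_at W \<phi> \<longleftrightarrow> norm W = 1 \<and> linear \<phi> \<and> \<phi> W = 0 \<and>
     (\<forall>v. \<phi> (\<phi> v) = - v + (v \<bullet> W) *\<^sub>R W) \<and>
     (\<forall>u v. \<phi> u \<bullet> v = - (u \<bullet> \<phi> v))"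

text \<open>Curvature tensor of M at p, given by the Gauss equation for a hypersurface in a
  complex space form of constant holomorphic sectional curvature 4c.\<close>
definition curvR :: "real \<Rightarrow> (tvec \<Rightarrow> tvec) \<Rightarrow> (tvec \<Rightarrow> tvec) \<Rightarrow> tvec \<Rightarrow> tvec \<Rightarrow> tvec \<Rightarrow> tvec" where
  "curvR c \<phi> A X Y Z =
     c *\<^sub>R ((Y \<bullet> Z) *\<^sub>R X - (X \<bullet> Z) *\<^sub>R Y + (\<phi> Y \<bullet> Z) *\<^sub>R \<phi> X
            - (\<phi> X \<bullet> Z) *\<^sub>R \<phi> Y - (2 * (\<phi> X \<bullet> Y)) *\<^sub>R \<phi> Z)
     + (A Y \<bullet> Z) *\<^sub>R A X - (A X \<bullet> Z) *\<^sub>R A Y"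

text \<open>Ricci tensor (type (1,1)): <S X, V> = trace (Z \<mapsto> R(Z,X)V).\<close>
definition ricci :: "real \<Rightarrow> (tvec \<Rightarrow> tvec) \<Rightarrow> (tvec \<Rightarrow> tvec) \<Rightarrow> tvec \<Rightarrow> tvec" where
  "ricci c \<phi> A X = (\<Sum>v\<in>Basis. (\<Sum>b\<in>Basis. curvR c \<phi> A b X v \<bullet> b) *\<^sub>R v)"

definition RdotS :: "real \<Rightarrow> (tvec \<Rightarrow> tvec) \<Rightarrow> (tvec \<Rightarrow> tvec) \<Rightarrow> tvec \<Rightarrow> tvec \<Rightarrow> tvec \<Rightarrow> tvec" where
  "RdotS c \<phi> A X Y Z = curvR c \<phi> A X Y (ricci c \<phi> A Z) - ricci c \<phi> A (curvR c \<phi> A X Y Z)"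

definition multiple_of :: "tvec \<Rightarrow> tvec \<Rightarrow> bool" where
  "multiple_of v W \<longleftrightarrow> (\<exists>t::real. v = t *\<^sub>R W)"

end

theory Submission imports Defs begin

lemma frame_span:
  fixes W X Y v :: tvec
  assumes "W \<bullet> W = 1" "X \<bullet> X = 1" "Y \<bullet> Y = 1" "W \<bullet> X = 0" "W \<bullet> Y = 0" "X \<bullet> Y = 0"
  shows "v = (v \<bullet> W) *\<^sub>R W + (v \<bullet> X) *\<^sub>R X + (v \<bullet> Y) *\<^sub>R Y"
proof (rule ccontr)
  define r where "r = v - ((v \<bullet> W) *\<^sub>R W + (v \<bullet> X) *\<^sub>R X + (v \<bullet> Y) *\<^sub>R Y)"
  assume "\<not> ?thesis"
  hence r0: "r \<noteq> 0" unfolding r_def by simp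
  have iW: "W \<bullet> X = X \<bullet> W" "W \<bullet> Y = Y \<bullet> W" "X \<bullet> Y = Y \<bullet> X" by (simp_all add: inner_commute)
  have rW: "r \<bullet> W = 0" "r \<bullet> X = 0" "r \<bullet> Y = 0"
    using assms iW unfolding r_def by (simp_all add: inner_diff_left inner_add_left)
  have ne: "W \<noteq> 0" "X \<noteq> 0" "Y \<noteq> 0" using assms by auto
  have d: "W \<noteq> X" "W \<noteq> Y" "X \<noteq> Y" "r \<noteq> W" "r \<noteq> X" "r \<noteq> Y"
    using assms rW by auto
  let ?S = "{W, X, Y, r}"
  have z: "X \<bullet> W = 0" "Y \<bullet> W = 0" "Y \<bullet> X = 0" "W \<bullet> r = 0" "X \<bullet> r = 0" "Y \<bullet> r = 0"
    using assms rW by (simp_all add: inner_commute)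
  have "pairwise orthogonal ?S"
    using assms rW z by (auto simp: pairwise_insert orthogonal_def)
  moreover have "0 \<notin> ?S" using ne r0 by auto
  ultimately have "independent ?S" by (rule pairwise_orthogonal_independent)
  hence "card ?S \<le> DIM(tvec)" using independent_bound by blast
  moreover have "card ?S = 4" using d by auto
  ultimately show False by simp
qed

lemma skew0: assumes "structure_at W \<phi>" shows "\<phi> b \<bullet> b = 0"
proof -
  have "\<phi> b \<bullet> b = -(b \<bullet> \<phi> b)" using assms unfolding structure_at_def by blast
  moreover have "b \<bullet> \<phi> b = \<phi> b \<bullet> b" by (rule inner_commute)
  ultimately show ?thesis by linarith
qed

lemma ricci_formula:
  assumes st: "structure_at W \<phi>" and sym: "\<forall>u v. A u \<bullet> v = u \<bullet> A v"
  shows "ricci c \<phi> A v = (5*c) *\<^sub>R v - (3*c*(v\<bullet>W)) *\<^sub>R W + (\<Sum>b\<in>Basis. A b \<bullet> b) *\<^sub>R A v - A (A v)"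
proof -
  define h where "h = (\<Sum>b\<in>Basis. A b \<bullet> b)"
  have sk: "\<And>u w. \<phi> u \<bullet> w = - (u \<bullet> \<phi> w)" and pp: "\<And>w. \<phi> (\<phi> w) = - w + (w \<bullet> W) *\<^sub>R W"
    using st unfolding structure_at_def by auto
  have sy: "\<And>u w. A u \<bullet> w = u \<bullet> A w" using sym by auto
  have t: "(\<Sum>b\<in>Basis. curvR c \<phi> A b v e \<bullet> b) = ((5*c) *\<^sub>R v - (3*c*(v\<bullet>W)) *\<^sub>R W + h *\<^sub>R A v - A (A v)) \<bullet> e" for e
  proof -
    have pt: "curvR c \<phi> A b v e \<bullet> b = c*(v\<bullet>e)*(b\<bullet>b) - c*((v\<bullet>b)*(e\<bullet>b)) + 3*c*((\<phi> e\<bullet>b)*(\<phi> v\<bullet>b)) + (A v\<bullet>e)*(A b\<bullet>b) - ((A v\<bullet>b)*(A e\<bullet>b))" for b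
    proof -
      have f: "v \<bullet> \<phi> b = -(b \<bullet> \<phi> v)" "e \<bullet> \<phi> b = -(b \<bullet> \<phi> e)" "e \<bullet> A b = b \<bullet> A e"
          "v \<bullet> A b = b \<bullet> A v" "v \<bullet> b = b \<bullet> v" "e \<bullet> b = b \<bullet> e" "b \<bullet> \<phi> b = 0"
        by (metis sk inner_commute, metis sk inner_commute, metis sy inner_commute, metis sy inner_commute,
            metis inner_commute, metis inner_commute, metis sk skew0[OF st] inner_commute)
      show ?thesis unfolding curvR_def
        by (simp add: inner_add_left inner_diff_left sk sy f algebra_simps)
    qed
    have s3: "(\<Sum>b\<in>(Basis::tvec set). b \<bullet> b) = 3" by simp
    have "(\<Sum>b\<in>Basis. curvR c \<phi> A b v e \<bullet> b) = c*(v\<bullet>e)*(\<Sum>b\<in>(Basis::tvec set). b \<bullet> b) - c*(\<Sum>b\<in>Basis. (v\<bullet>b)*(e\<bullet>b))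
       + 3*c*(\<Sum>b\<in>Basis. (\<phi> e\<bullet>b)*(\<phi> v\<bullet>b))
       + (A v\<bullet>e)*h - (\<Sum>b\<in>Basis. (A v\<bullet>b)*(A e\<bullet>b))"
      unfolding pt h_def by (simp add: sum.distrib sum_subtractf sum_distrib_left)
    also have "\<dots> = c*(v\<bullet>e)*3 - c*(v\<bullet>e) + 3*c*(\<phi> e \<bullet> \<phi> v) + (A v\<bullet>e)*h - (A v \<bullet> A e)"
      by (simp only: s3 euclidean_inner[symmetric])
    also have "\<dots> = ((5*c) *\<^sub>R v - (3*c*(v\<bullet>W)) *\<^sub>R W + h *\<^sub>R A v - A (A v)) \<bullet> e"
      by (simp add: sk pp sy inner_add_left inner_diff_left inner_add_right inner_commute algebra_simps)
    finally show ?thesis .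
  qed
  show ?thesis unfolding ricci_def t h_def[symmetric] by (rule euclidean_representation)
qed

lemma main:
  fixes X Y :: tvec
  assumes st: "structure_at W \<phi>" and lin: "linear A" and sym: "\<forall>u v. A u \<bullet> v = u \<bullet> A v"
    and XX: "X \<bullet> X = 1" and XW: "X \<bullet> W = 0" and Ydef: "Y = \<phi> X" and AWY: "A W \<bullet> Y = 0"
  defines "\<alpha> \<equiv> A W \<bullet> W" and "\<beta> \<equiv> A W \<bullet> X" and "lam \<equiv> A X \<bullet> X" and "mu \<equiv> A X \<bullet> Y" and "nu \<equiv> A Y \<bullet> Y"
  shows "RdotS c \<phi> A X Y X \<bullet> X = -2 * (mu * (\<beta>\<^sup>2 * nu - \<alpha> * (4 * c + lam * nu - mu\<^sup>2)))"
    and "RdotS c \<phi> A X Y X \<bullet> Y = \<beta>\<^sup>2 * (mu\<^sup>2 - nu\<^sup>2) - (4 * c + lam * nu - mu\<^sup>2) * (\<alpha> * (lam - nu) - \<beta>\<^sup>2)"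
    and "RdotS c \<phi> A X Y Y \<bullet> X = \<beta>\<^sup>2 * (mu\<^sup>2 - nu\<^sup>2) - (4 * c + lam * nu - mu\<^sup>2) * (\<alpha> * (lam - nu) - \<beta>\<^sup>2)"
    and "RdotS c \<phi> A X Y Y \<bullet> Y = 2 * (mu * (\<beta>\<^sup>2 * nu - \<alpha> * (4 * c + lam * nu - mu\<^sup>2)))"
proof -
  have sk: "\<And>u w. \<phi> u \<bullet> w = - (u \<bullet> \<phi> w)" and pp: "\<And>w. \<phi> (\<phi> w) = - w + (w \<bullet> W) *\<^sub>R W"
    and linp: "linear \<phi>" and pW: "\<phi> W = 0" and nW: "norm W = 1"
    using st unfolding structure_at_def by auto
  have WW: "W \<bullet> W = 1" using nW by (simp add: power2_norm_eq_inner[symmetric])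
  have WX: "W \<bullet> X = 0" using XW by (simp add: inner_commute)
  have YW: "Y \<bullet> W = 0" unfolding Ydef using sk[of X W] pW by simp
  have WY: "W \<bullet> Y = 0" using YW by (simp add: inner_commute)
  have YX: "Y \<bullet> X = 0" unfolding Ydef by (rule skew0[OF st])
  have XY: "X \<bullet> Y = 0" using YX by (simp add: inner_commute)
  have pY: "\<phi> Y = - X" unfolding Ydef using pp[of X] XW by simp
  have pX: "\<phi> X = Y" using Ydef by simp
  have YY: "Y \<bullet> Y = 1" using sk[of X Y] pY XX unfolding Ydef[symmetric] by simp
  note sp = frame_span[OF WW XX YY WX WY XY]
  have AW: "A W = \<alpha> *\<^sub>R W + \<beta> *\<^sub>R X"
    using sp[of "A W"] AWY unfolding \<alpha>_def \<beta>_def by simp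
  have AXW: "A X \<bullet> W = \<beta>" unfolding \<beta>_def using sym by (metis inner_commute)
  have AYW: "A Y \<bullet> W = 0" using sym AWY by (metis inner_commute)
  have AYX: "A Y \<bullet> X = mu" unfolding mu_def using sym by (metis inner_commute)
  have AX: "A X = \<beta> *\<^sub>R W + lam *\<^sub>R X + mu *\<^sub>R Y"
    using sp[of "A X"] AXW unfolding lam_def mu_def by simp
  have AY: "A Y = mu *\<^sub>R X + nu *\<^sub>R Y"
    using sp[of "A Y"] AYW AYX unfolding nu_def by simp
  have hh: "(\<Sum>b\<in>Basis. A b \<bullet> b) = \<alpha> + lam + nu"
  proof -
    have "A b \<bullet> b = (b \<bullet> W) * (A W \<bullet> b) + (b \<bullet> X) * (A X \<bullet> b) + (b \<bullet> Y) * (A Y \<bullet> b)" for b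
      using arg_cong[OF sp[of b], of "\<lambda>u. A u \<bullet> b"]
      by (simp add: linear_add[OF lin] linear_scale[OF lin] inner_add_left)
    hence "(\<Sum>b\<in>Basis. A b \<bullet> b) = (\<Sum>b\<in>(Basis::tvec set). (W \<bullet> b) * (A W \<bullet> b)) + (\<Sum>b\<in>(Basis::tvec set). (X \<bullet> b) * (A X \<bullet> b))
       + (\<Sum>b\<in>(Basis::tvec set). (Y \<bullet> b) * (A Y \<bullet> b))"
      by (simp add: sum.distrib inner_commute)
    also have "\<dots> = W \<bullet> A W + X \<bullet> A X + Y \<bullet> A Y" by (simp only: euclidean_inner[symmetric])
    finally show ?thesis unfolding \<alpha>_def lam_def nu_def by (simp add: inner_commute)
  qed
  note Sf = ricci_formula[OF st sym, of c, unfolded hh]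
  note simps = RdotS_def curvR_def Sf linear_add[OF lin] linear_scale[OF lin] linear_diff[OF lin] linear_neg[OF lin]
    linear_add[OF linp] linear_scale[OF linp] linear_diff[OF linp] linear_neg[OF linp]
    AW AX AY pW pX pY inner_add_left inner_add_right inner_diff_left inner_diff_right inner_minus_left inner_minus_right
    WW XX YY WX XW WY YW XY YX inner_scaleR_left inner_scaleR_right inner_zero_left inner_zero_right
    scaleR_zero_right linear_0[OF lin] linear_0[OF linp]
  show "RdotS c \<phi> A X Y X \<bullet> X = -2 * (mu * (\<beta>\<^sup>2 * nu - \<alpha> * (4 * c + lam * nu - mu\<^sup>2)))"
    by (simp only: simps) (simp add: algebra_simps power2_eq_square)
  show "RdotS c \<phi> A X Y X \<bullet> Y = \<beta>\<^sup>2 * (mu\<^sup>2 - nu\<^sup>2) - (4 * c + lam * nu - mu\<^sup>2) * (\<alpha> * (lam - nu) - \<beta>\<^sup>2)"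
    by (simp only: simps) (simp add: algebra_simps power2_eq_square)
  show "RdotS c \<phi> A X Y Y \<bullet> X = \<beta>\<^sup>2 * (mu\<^sup>2 - nu\<^sup>2) - (4 * c + lam * nu - mu\<^sup>2) * (\<alpha> * (lam - nu) - \<beta>\<^sup>2)"
    by (simp only: simps) (simp add: algebra_simps power2_eq_square)
  show "RdotS c \<phi> A X Y Y \<bullet> Y = 2 * (mu * (\<beta>\<^sup>2 * nu - \<alpha> * (4 * c + lam * nu - mu\<^sup>2)))"
    by (simp only: simps) (simp add: algebra_simps power2_eq_square)
qed

lemma mult_iff:
  fixes X Y v :: tvec
  assumes st: "structure_at W \<phi>" and XX: "X \<bullet> X = 1" and XW: "X \<bullet> W = 0" and Ydef: "Y = \<phi> X"
  shows "multiple_of v W \<longleftrightarrow> v \<bullet> X = 0 \<and> v \<bullet> Y = 0"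
proof -
  have sk: "\<And>u w. \<phi> u \<bullet> w = - (u \<bullet> \<phi> w)" and pp: "\<And>w. \<phi> (\<phi> w) = - w + (w \<bullet> W) *\<^sub>R W"
    and pW: "\<phi> W = 0" and nW: "norm W = 1"
    using st unfolding structure_at_def by auto
  have WW: "W \<bullet> W = 1" using nW by (simp add: power2_norm_eq_inner[symmetric])
  have WX: "W \<bullet> X = 0" using XW by (simp add: inner_commute)
  have YW: "Y \<bullet> W = 0" unfolding Ydef using sk[of X W] pW by simp
  have WY: "W \<bullet> Y = 0" using YW by (simp add: inner_commute)
  have YX: "Y \<bullet> X = 0" unfolding Ydef by (rule skew0[OF st])
  have XY: "X \<bullet> Y = 0" using YX by (simp add: inner_commute)
  have pY: "\<phi> Y = - X" unfolding Ydef using pp[of X] XW by simp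
  have YY: "Y \<bullet> Y = 1" using sk[of X Y] pY XX unfolding Ydef[symmetric] by simp
  note sp = frame_span[OF WW XX YY WX WY XY]
  show ?thesis
  proof
    assume "multiple_of v W"
    then obtain t where "v = t *\<^sub>R W" unfolding multiple_of_def by blast
    thus "v \<bullet> X = 0 \<and> v \<bullet> Y = 0" using WX WY by simp
  next
    assume "v \<bullet> X = 0 \<and> v \<bullet> Y = 0"
    hence "v = (v \<bullet> W) *\<^sub>R W" using sp[of v] by simp
    thus "multiple_of v W" unfolding multiple_of_def by blast
  qed
qed

lemma combined:
  fixes X Y :: tvec
  assumes st: "structure_at W \<phi>" and lin: "linear A" and sym: "\<forall>u v. A u \<bullet> v = u \<bullet> A v"
    and XX: "X \<bullet> X = 1" and XW: "X \<bullet> W = 0" and Ydef: "Y = \<phi> X" and AWY: "A W \<bullet> Y = 0"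
  defines "\<alpha> \<equiv> A W \<bullet> W" and "\<beta> \<equiv> A W \<bullet> X" and "lam \<equiv> A X \<bullet> X" and "mu \<equiv> A X \<bullet> Y" and "nu \<equiv> A Y \<bullet> Y"
  shows "(multiple_of (RdotS c \<phi> A X Y X) W \<and> multiple_of (RdotS c \<phi> A X Y Y) W) \<longleftrightarrow>
          (mu * (\<beta>\<^sup>2 * nu - \<alpha> * (4 * c + lam * nu - mu\<^sup>2)) = 0 \<and>
           \<beta>\<^sup>2 * (mu\<^sup>2 - nu\<^sup>2) = (4 * c + lam * nu - mu\<^sup>2) * (\<alpha> * (lam - nu) - \<beta>\<^sup>2))"
  unfolding mult_iff[OF st XX XW Ydef] main[OF st lin sym XX XW Ydef AWY] \<alpha>_def[symmetric] \<beta>_def[symmetric]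
     lam_def[symmetric] mu_def[symmetric] nu_def[symmetric]
  by auto

theorem proposition7:
  fixes c :: real and W :: tvec and \<phi> A :: "tvec \<Rightarrow> tvec"
  assumes "c \<noteq> 0"
    and "structure_at W \<phi>"
    and "linear A" and "\<forall>u v. A u \<bullet> v = u \<bullet> A v"
  shows
   "(\<forall>(\<beta>::real) X. A W \<noteq> (A W \<bullet> W) *\<^sub>R W \<longrightarrow> \<beta> > 0 \<longrightarrow> norm X = 1 \<longrightarrow> X \<bullet> W = 0 \<longrightarrow>
       A W = (A W \<bullet> W) *\<^sub>R W + \<beta> *\<^sub>R X \<longrightarrow>
       (let \<alpha> = A W \<bullet> W; Y = \<phi> X; lam = A X \<bullet> X; mu = A X \<bullet> Y; nu = A Y \<bullet> Y in
         ((multiple_of (RdotS c \<phi> A X Y X) W \<and> multiple_of (RdotS c \<phi> A X Y Y) W) \<longleftrightarrow>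
          (mu * (\<beta>\<^sup>2 * nu - \<alpha> * (4 * c + lam * nu - mu\<^sup>2)) = 0 \<and>
           \<beta>\<^sup>2 * (mu\<^sup>2 - nu\<^sup>2) = (4 * c + lam * nu - mu\<^sup>2) * (\<alpha> * (lam - nu) - \<beta>\<^sup>2)))))
    \<and>
    (\<forall>X (k::real). A W = (A W \<bullet> W) *\<^sub>R W \<longrightarrow> norm X = 1 \<longrightarrow> X \<bullet> W = 0 \<longrightarrow> A X = k *\<^sub>R X \<longrightarrow>
       (let \<alpha> = A W \<bullet> W; Y = \<phi> X; lam = A X \<bullet> X; nu = A Y \<bullet> Y; \<beta> = (0::real); mu = (0::real) in
         ((multiple_of (RdotS c \<phi> A X Y X) W \<and> multiple_of (RdotS c \<phi> A X Y Y) W) \<longleftrightarrow>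
          (mu * (\<beta>\<^sup>2 * nu - \<alpha> * (4 * c + lam * nu - mu\<^sup>2)) = 0 \<and>
           \<beta>\<^sup>2 * (mu\<^sup>2 - nu\<^sup>2) = (4 * c + lam * nu - mu\<^sup>2) * (\<alpha> * (lam - nu) - \<beta>\<^sup>2)))))"
proof -
  note st = assms(2) and lin = assms(3) and sym = assms(4)
  have sk: "\<And>u w. \<phi> u \<bullet> w = - (u \<bullet> \<phi> w)" and pW: "\<phi> W = 0" and nW: "norm W = 1"
    using st unfolding structure_at_def by auto
  have WW: "W \<bullet> W = 1" using nW by (simp add: power2_norm_eq_inner[symmetric])
  have WpX: "W \<bullet> \<phi> X = 0" for X using sk[of W X] pW by simp
  have XpX: "X \<bullet> \<phi> X = 0" for X using skew0[OF st, of X] by (simp add: inner_commute)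
  have n1: "norm X = 1 \<Longrightarrow> X \<bullet> X = 1" for X :: tvec by (simp add: power2_norm_eq_inner[symmetric])
  show ?thesis
  proof (intro conjI allI impI)
    fix \<beta> :: real and X :: tvec
    assume "\<beta> > 0" "norm X = 1" and XW: "X \<bullet> W = 0" and AW: "A W = (A W \<bullet> W) *\<^sub>R W + \<beta> *\<^sub>R X"
    have XX: "X \<bullet> X = 1" using n1 \<open>norm X = 1\<close> .
    have AWY: "A W \<bullet> \<phi> X = 0" by (subst AW) (simp add: inner_add_left WpX XpX)
    have b: "A W \<bullet> X = \<beta>" by (subst AW) (simp add: inner_add_left XX XW inner_commute[of W X])
    show "let \<alpha> = A W \<bullet> W; Y = \<phi> X; lam = A X \<bullet> X; mu = A X \<bullet> Y; nu = A Y \<bullet> Y in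
         ((multiple_of (RdotS c \<phi> A X Y X) W \<and> multiple_of (RdotS c \<phi> A X Y Y) W) \<longleftrightarrow>
          (mu * (\<beta>\<^sup>2 * nu - \<alpha> * (4 * c + lam * nu - mu\<^sup>2)) = 0 \<and>
           \<beta>\<^sup>2 * (mu\<^sup>2 - nu\<^sup>2) = (4 * c + lam * nu - mu\<^sup>2) * (\<alpha> * (lam - nu) - \<beta>\<^sup>2)))"
      unfolding Let_def using combined[OF st lin sym XX XW refl AWY, of c] b by simp
  next
    fix X :: tvec and k :: real
    assume AW: "A W = (A W \<bullet> W) *\<^sub>R W" and "norm X = 1" and XW: "X \<bullet> W = 0" and AX: "A X = k *\<^sub>R X"
    have XX: "X \<bullet> X = 1" using n1 \<open>norm X = 1\<close> .
    have AWY: "A W \<bullet> \<phi> X = 0" by (subst AW) (simp add: WpX)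
    have WX: "W \<bullet> X = 0" using XW by (simp add: inner_commute)
    have b: "A W \<bullet> X = 0" by (subst AW) (simp add: WX)
    have m: "A X \<bullet> \<phi> X = 0" by (simp add: AX XpX)
    show "let \<alpha> = A W \<bullet> W; Y = \<phi> X; lam = A X \<bullet> X; nu = A Y \<bullet> Y; \<beta> = (0::real); mu = (0::real) in
         ((multiple_of (RdotS c \<phi> A X Y X) W \<and> multiple_of (RdotS c \<phi> A X Y Y) W) \<longleftrightarrow>
          (mu * (\<beta>\<^sup>2 * nu - \<alpha> * (4 * c + lam * nu - mu\<^sup>2)) = 0 \<and>
           \<beta>\<^sup>2 * (mu\<^sup>2 - nu\<^sup>2) = (4 * c + lam * nu - mu\<^sup>2) * (\<alpha> * (lam - nu) - \<beta>\<^sup>2)))"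
      unfolding Let_def using combined[OF st lin sym XX XW refl AWY, of c] b m by simp
  qed
qed

end
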